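(* Fix $0<p<1$ and real numbers $L<U$ (not necessarily integers, and without requiring $U-L\ge 4$). With the notation of the context, for every real $x\in[L,U]$ there exist $\alpha(x),\beta(x)\in[0,1]$ with $\alpha(x)=\lim_{k\to\infty}\alpha_k(x)$ and $\beta(x)=\lim_{k\to\infty}\beta_k(x)$, and moreover $\alpha(x)+\beta(x)=1$.
   Context: Let $\xi_1,\xi_2,\dots$ be i.i.d. random variables with values in $\{1,-1\}$, $\mathbb{P}(\xi_i=1)=p$, $\mathbb{P}(\xi_i=-1)=q:=1-p$. Define $X_k=-1$ if $\xi_k=-1$; $X_k=2$ if $\xi_k=\xi_{k-1}=1$ (for $k\ge 2$); and $X_k=1$ otherwise (in particular $X_1=1$ when $\xi_1=1$). Let $S_0=0$, $S_k=X_1+\dots+X_k$, and $S^x_k=x+S_k$. For $k\ge 0$ let $\tau^x_k=\min\{l\in\{0,\dots,k\}: S^x_l\le L \text{ or } S^x_l\ge U\}$ if this set is nonempty, and $\tau^x_k=k$ otherwise. Let $\alpha_k(x)=\mathbb{P}\big(\bigcup_{l=0}^k\{\tau^x_k=l,\ S^x_l\le L\}\big)$ and $\beta_k(x)=\mathbb{P}\big(\bigcup_{l=0}^k\{\tau^x_k=l,\ S^x_l\ge U\}\big)$. *)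

theory Defs
  imports "HOL-Probability.Probability"
begin

text \<open>Increments: xi is the sequence of +-1 variables (indexed from 1),
  X k = -1 if xi k = -1; 2 if k >= 2 and xi k = xi (k-1) = 1; 1 otherwise.\<close>
definition incr :: "(nat \<Rightarrow> 'a \<Rightarrow> real) \<Rightarrow> nat \<Rightarrow> 'a \<Rightarrow> real" where
  "incr \<xi> k \<omega> =
     (if \<xi> k \<omega> = -1 then -1
      else if k \<ge> 2 \<and> \<xi> k \<omega> = 1 \<and> \<xi> (k - 1) \<omega> = 1 then 2
      else 1)"

definition walk :: "(nat \<Rightarrow> 'a \<Rightarrow> real) \<Rightarrow> real \<Rightarrow> nat \<Rightarrow> 'a \<Rightarrow> real" where
  "walk \<xi> x k \<omega> = x + (\<Sum>i\<in>{1..k}. incr \<xi> i \<omega>)"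

definition stop_time ::
  "real \<Rightarrow> real \<Rightarrow> (nat \<Rightarrow> 'a \<Rightarrow> real) \<Rightarrow> real \<Rightarrow> nat \<Rightarrow> 'a \<Rightarrow> nat" where
  "stop_time L U \<xi> x k \<omega> =
     (let A = {l\<in>{0..k}. walk \<xi> x l \<omega> \<le> L \<or> walk \<xi> x l \<omega> \<ge> U}
      in if A \<noteq> {} then Min A else k)"

definition alpha_k ::
  "'a measure \<Rightarrow> real \<Rightarrow> real \<Rightarrow> (nat \<Rightarrow> 'a \<Rightarrow> real) \<Rightarrow> nat \<Rightarrow> real \<Rightarrow> real" where
  "alpha_k M L U \<xi> k x = measure M
     (\<Union>l\<in>{0..k}. {\<omega>\<in>space M. stop_time L U \<xi> x k \<omega> = l \<and> walk \<xi> x l \<omega> \<le> L})"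

definition beta_k ::
  "'a measure \<Rightarrow> real \<Rightarrow> real \<Rightarrow> (nat \<Rightarrow> 'a \<Rightarrow> real) \<Rightarrow> nat \<Rightarrow> real \<Rightarrow> real" where
  "beta_k M L U \<xi> k x = measure M
     (\<Union>l\<in>{0..k}. {\<omega>\<in>space M. stop_time L U \<xi> x k \<omega> = l \<and> walk \<xi> x l \<omega> \<ge> U})"

end

theory Submission
  imports Defs
begin

lemma walk_meas:
  assumes [measurable]: "\<And>i. f i \<in> borel_measurable M"
  shows "walk f x l \<in> borel_measurable M"
  unfolding walk_def incr_def by measurable

lemma walk_max: "walk (\<lambda>i. \<xi> (max 1 i)) x l = walk \<xi> x l"
proof -
  have "incr (\<lambda>i. \<xi> (max 1 i)) j = incr \<xi> j" if "j \<in> {1..l}" for j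
    using that by (auto simp: incr_def fun_eq_iff max_def)
  then show ?thesis unfolding walk_def by (auto simp: fun_eq_iff intro!: sum.cong)
qed

lemma walk_split: "walk \<xi> x (a+n) \<omega> = walk \<xi> x a \<omega> + (\<Sum>j\<in>{a<..a+n}. incr \<xi> j \<omega>)"
proof -
  have "{1..a+n} = {1..a} \<union> {a<..a+n}" by auto
  then show ?thesis unfolding walk_def by (simp add: sum.union_disjoint ivl_disj_int)
qed

lemma stop_char:
  fixes f :: "nat \<Rightarrow> real"
  assumes "stop_time L U \<xi> x k \<omega> = s"
    and "\<And>l. f l = walk \<xi> x l \<omega>"
    and P: "\<And>l. P l \<Longrightarrow> f l \<le> L \<or> f l \<ge> U"
    and Q: "\<not> P s \<or> f s \<le> L \<or> f s \<ge> U"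
  shows "(\<exists>l\<in>{0..k}. s = l \<and> P l) \<longleftrightarrow> (\<exists>l\<le>k. (\<forall>j<l. \<not>(f j \<le> L \<or> f j \<ge> U)) \<and> P l)"
proof -
  define A where "A = {l\<in>{0..k}. f l \<le> L \<or> f l \<ge> U}"
  have fin: "finite A" unfolding A_def by auto
  have s: "s = (if A \<noteq> {} then Min A else k)"
    using assms(1) unfolding stop_time_def A_def Let_def assms(2) by simp
  show ?thesis
  proof (cases "A = {}")
    case True
    then show ?thesis using P s unfolding A_def by auto
  next
    case False
    have sA: "s \<in> A" using False fin s by auto
    have smin: "\<And>j. j \<in> A \<Longrightarrow> s \<le> j" using False fin s by auto
    show ?thesis
    proof
      assume "\<exists>l\<in>{0..k}. s = l \<and> P l"
      then show "\<exists>l\<le>k. (\<forall>j<l. \<not>(f j \<le> L \<or> f j \<ge> U)) \<and> P l"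
      proof (intro exI[of _ s] conjI allI impI)
        assume h: "\<exists>l\<in>{0..k}. s = l \<and> P l"
        show "s \<le> k" "P s" using h by auto
        fix j assume "j < s"
        then show "\<not>(f j \<le> L \<or> f j \<ge> U)" using smin[of j] sA unfolding A_def by fastforce
      qed
    next
      assume "\<exists>l\<le>k. (\<forall>j<l. \<not>(f j \<le> L \<or> f j \<ge> U)) \<and> P l"
      then obtain l where l: "l \<le> k" "\<forall>j<l. \<not>(f j \<le> L \<or> f j \<ge> U)" "P l" by blast
      have "l \<in> A" using l P unfolding A_def by auto
      then have "s \<le> l" using smin by auto
      moreover have "\<not> s < l" using l(2) sA unfolding A_def by auto
      ultimately show "\<exists>l\<in>{0..k}. s = l \<and> P l" using l by auto
    qed
  qed
qed

theorem corollary2p5: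
  fixes M :: "'a measure" and \<xi> :: "nat \<Rightarrow> 'a \<Rightarrow> real" and p L U :: real
  assumes "prob_space M"
    and "0 < p" and "p < 1"
    and "L < U"
    and "prob_space.indep_vars M (\<lambda>_. borel) \<xi> {1..}"
    and "\<And>i \<omega>. i \<ge> 1 \<Longrightarrow> \<omega> \<in> space M \<Longrightarrow> \<xi> i \<omega> \<in> {1, -1}"
    and "\<And>i. i \<ge> 1 \<Longrightarrow> measure M {\<omega>\<in>space M. \<xi> i \<omega> = 1} = p"
    and "\<And>i. i \<ge> 1 \<Longrightarrow> measure M {\<omega>\<in>space M. \<xi> i \<omega> = -1} = 1 - p"
  shows "\<forall>x\<in>{L..U}. \<exists>a b. a \<in> {0..1} \<and> b \<in> {0..1}
           \<and> (\<lambda>k. alpha_k M L U \<xi> k x) \<longlonglongrightarrow> a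
           \<and> (\<lambda>k. beta_k M L U \<xi> k x) \<longlonglongrightarrow> b
           \<and> a + b = 1"
proof
  fix x assume "x \<in> {L..U}"
  interpret P: prob_space M by fact
  have iv: "P.indep_vars (\<lambda>_. borel) \<xi> {1..}" by fact
  have meas: "\<And>i. i \<ge> 1 \<Longrightarrow> \<xi> i \<in> borel_measurable M"
    using iv unfolding P.indep_vars_def2 by auto
  have ind: "P.indep_sets (\<lambda>i. {\<xi> i -` A \<inter> space M | A. A \<in> sets borel}) {1..}"
    using iv unfolding P.indep_vars_def2 by auto
  define W where "W l \<omega> = walk \<xi> x l \<omega>" for l \<omega>
  have Wm[measurable]: "W l \<in> borel_measurable M" for l
  proof -
    have "(\<lambda>i. \<xi> (max 1 i)) i \<in> borel_measurable M" for i using meas by simp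
    from walk_meas[of "\<lambda>i. \<xi> (max 1 i)", OF this]
    show ?thesis unfolding W_def walk_max by (simp add: fun_eq_iff[symmetric])
  qed
  define low where "low k = {\<omega>\<in>space M. \<exists>l\<le>k. (\<forall>j<l. \<not>(W j \<omega> \<le> L \<or> W j \<omega> \<ge> U)) \<and> W l \<omega> \<le> L}" for k
  define up where "up k = {\<omega>\<in>space M. \<exists>l\<le>k. (\<forall>j<l. \<not>(W j \<omega> \<le> L \<or> W j \<omega> \<ge> U)) \<and> W l \<omega> \<ge> U}" for k
  define noex where "noex k = {\<omega>\<in>space M. \<forall>l\<le>k. \<not>(W l \<omega> \<le> L \<or> W l \<omega> \<ge> U)}" for k
  have lowm[measurable]: "low k \<in> sets M" for k unfolding low_def by measurable
  have upm[measurable]: "up k \<in> sets M" for k unfolding up_def by measurable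
  have noexm[measurable]: "noex k \<in> sets M" for k unfolding noex_def by measurable
  have alpha: "alpha_k M L U \<xi> k x = P.prob (low k)" for k
  proof -
    have *: "(\<exists>l\<in>{0..k}. stop_time L U \<xi> x k \<omega> = l \<and> W l \<omega> \<le> L) \<longleftrightarrow>
      (\<exists>l\<le>k. (\<forall>j<l. \<not>(W j \<omega> \<le> L \<or> W j \<omega> \<ge> U)) \<and> W l \<omega> \<le> L)" for \<omega>
      by (rule stop_char[OF refl]) (auto simp: W_def)
    have "(\<Union>l\<in>{0..k}. {\<omega>\<in>space M. stop_time L U \<xi> x k \<omega> = l \<and> walk \<xi> x l \<omega> \<le> L}) = low k"
      using * unfolding low_def W_def by blast
    then show ?thesis unfolding alpha_k_def by simp
  qed
  have beta: "beta_k M L U \<xi> k x = P.prob (up k)" for k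
  proof -
    have *: "(\<exists>l\<in>{0..k}. stop_time L U \<xi> x k \<omega> = l \<and> W l \<omega> \<ge> U) \<longleftrightarrow>
      (\<exists>l\<le>k. (\<forall>j<l. \<not>(W j \<omega> \<le> L \<or> W j \<omega> \<ge> U)) \<and> W l \<omega> \<ge> U)" for \<omega>
      by (rule stop_char[OF refl]) (auto simp: W_def)
    have "(\<Union>l\<in>{0..k}. {\<omega>\<in>space M. stop_time L U \<xi> x k \<omega> = l \<and> walk \<xi> x l \<omega> \<ge> U}) = up k"
      using * unfolding up_def W_def by blast
    then show ?thesis unfolding beta_k_def by simp
  qed
  have disj: "low k \<inter> up k = {}" for k
  proof (safe)
    fix \<omega> assume a: "\<omega> \<in> low k" "\<omega> \<in> up k"
    from a(1) obtain l1 where l1: "\<forall>j<l1. \<not>(W j \<omega> \<le> L \<or> W j \<omega> \<ge> U)" "W l1 \<omega> \<le> L" unfolding low_def by auto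
    from a(2) obtain l2 where l2: "\<forall>j<l2. \<not>(W j \<omega> \<le> L \<or> W j \<omega> \<ge> U)" "W l2 \<omega> \<ge> U" unfolding up_def by auto
    have "l1 = l2" using l1 l2 by (metis linorder_neqE_nat)
    then show "\<omega> \<in> {}" using l1 l2 \<open>L < U\<close> by auto
  qed
  have un: "low k \<union> up k = space M - noex k" for k
  proof (safe)
    fix \<omega> assume "\<omega> \<in> low k" "\<omega> \<in> noex k" then show False unfolding low_def noex_def by auto
  next
    fix \<omega> assume "\<omega> \<in> up k" "\<omega> \<in> noex k" then show False unfolding up_def noex_def by auto
  next
    fix \<omega> assume "\<omega> \<in> low k" then show "\<omega> \<in> space M" unfolding low_def by auto
  next
    fix \<omega> assume "\<omega> \<in> up k" then show "\<omega> \<in> space M" unfolding up_def by auto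
  next
    fix \<omega> assume w: "\<omega> \<in> space M" "\<omega> \<notin> noex k" "\<omega> \<notin> up k"
    then have "\<exists>n. n \<le> k \<and> (W n \<omega> \<le> L \<or> W n \<omega> \<ge> U)" unfolding noex_def by auto
    then obtain n where n: "n \<le> k" "W n \<omega> \<le> L \<or> W n \<omega> \<ge> U" "\<forall>m<n. \<not>(m \<le> k \<and> (W m \<omega> \<le> L \<or> W m \<omega> \<ge> U))"
      using exists_least_iff[where P="\<lambda>n. n \<le> k \<and> (W n \<omega> \<le> L \<or> W n \<omega> \<ge> U)"] by blast
    have n3: "\<forall>m<n. \<not>(W m \<omega> \<le> L \<or> W m \<omega> \<ge> U)" using n by auto
    show "\<omega> \<in> low k"
    proof (cases "W n \<omega> \<le> L")
      case True then show ?thesis using n n3 w unfolding low_def by auto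
    next
      case False then show ?thesis using n n3 w unfolding up_def by auto
    qed
  qed
  have sumeq: "alpha_k M L U \<xi> k x + beta_k M L U \<xi> k x = 1 - P.prob (noex k)" for k
    unfolding alpha beta
    using P.finite_measure_Union[of "low k" "up k"] disj[of k] un[of k] P.prob_compl[of "noex k"] by simp
  have noex0: "(\<lambda>k. P.prob (noex k)) \<longlonglongrightarrow> 0"
  proof -
    define N where "N = nat \<lceil>U - L\<rceil> + 1"
    have N1: "N \<ge> 1" unfolding N_def by simp
    have NUL: "real N > U - L" unfolding N_def by linarith
    define q where "q = 1 - p"
    define r where "r = 1 - q ^ N"
    have q01: "0 < q" "q < 1" using assms(2,3) unfolding q_def by auto
    have r01: "0 \<le> r" "r < 1" unfolding r_def using q01 by (auto simp: power_le_one)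
    define Ib where "Ib i = {i*N<..i*N+N}" for i
    define C where "C i = {\<omega>\<in>space M. \<forall>j\<in>Ib i. \<xi> j \<omega> = -1}" for i
    have Ib1: "Ib i \<subseteq> {1..}" for i unfolding Ib_def by auto
    have Ibne: "Ib i \<noteq> {}" "finite (Ib i)" "card (Ib i) = N" for i using N1 unfolding Ib_def by auto
    have pre: "\<xi> j -` {-1} \<inter> space M = {\<omega>\<in>space M. \<xi> j \<omega> = -1}" for j by auto
    have Cint: "C i = (\<Inter>j\<in>Ib i. \<xi> j -` {-1} \<inter> space M)" for i
      unfolding C_def using Ibne(1)[of i] by auto
    have preev: "\<xi> j -` {-1} \<inter> space M \<in> P.events" if "j \<ge> 1" for j
      using meas[OF that] by (rule measurable_sets) auto
    have borel1: "{-1::real} \<in> sets borel" by simp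
    have Cev: "C i \<in> P.events" for i
      unfolding Cint by (rule sets.finite_INT[OF Ibne(2) Ibne(1)]) (use Ib1 preev in force)
    have probC: "P.prob (C i) = q ^ N" for i
    proof -
      have "P.prob (C i) = (\<Prod>j\<in>Ib i. P.prob (\<xi> j -` {-1} \<inter> space M))"
        unfolding Cint by (rule P.indep_setsD[OF ind Ib1 Ibne(1) Ibne(2)]) (use borel1 in blast)
      also have "\<dots> = (\<Prod>j\<in>Ib i. q)"
        using Ib1[of i] assms(8) unfolding pre q_def by (intro prod.cong) auto
      finally show ?thesis using Ibne by simp
    qed
    have disjf: "disjoint_family_on Ib UNIV"
    unfolding disjoint_family_on_def proof (intro ballI impI)
      fix i j :: nat assume "i \<noteq> j"
      moreover have "Ib i \<inter> Ib j = {}" if "i < j" for i j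
      proof -
        have "i * N + N \<le> j * N" using that
          by (metis Suc_leI add.commute mult_Suc mult_le_mono1)
        then show ?thesis unfolding Ib_def by auto
      qed
      ultimately show "Ib i \<inter> Ib j = {}" by (metis Int_commute linorder_neqE_nat)
    qed
    have ind2: "P.indep_sets (\<lambda>i. sigma_sets (space M) (\<Union>j\<in>Ib i. {\<xi> j -` A \<inter> space M | A. A \<in> sets borel})) UNIV"
    proof (rule P.indep_sets_collect_sigma)
      show "P.indep_sets (\<lambda>i. {\<xi> i -` A \<inter> space M | A. A \<in> sets borel}) (\<Union>j\<in>UNIV. Ib j)"
        by (rule P.indep_sets_mono_index[OF _ ind]) (use Ib1 in auto)
    next
      fix i j
      show "Int_stable {\<xi> i -` A \<inter> space M |A. A \<in> sets borel}"
        apply (auto simp: Int_stable_def)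
        apply (rule_tac x="A \<inter> Aa" in exI)
        apply auto
        done
    qed (rule disjf)
    have Csig: "space M - C i \<in> sigma_sets (space M) (\<Union>j\<in>Ib i. {\<xi> j -` A \<inter> space M | A. A \<in> sets borel})" for i
    proof -
      let ?S = "(\<Union>j\<in>Ib i. {\<xi> j -` A \<inter> space M | A. A \<in> sets borel})"
      have sa: "sigma_algebra (space M) (sigma_sets (space M) ?S)"
        by (rule sigma_algebra_sigma_sets) auto
      interpret S: sigma_algebra "space M" "sigma_sets (space M) ?S" by (rule sa)
      have "C i \<in> sigma_sets (space M) ?S"
        unfolding Cint
      proof (rule S.finite_INT)
        fix j assume "j \<in> Ib i"
        then show "\<xi> j -` {-1} \<inter> space M \<in> sigma_sets (space M) ?S"
          using borel1 by (intro sigma_sets.Basic) blast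
      qed (use Ibne in auto)
      then show ?thesis using S.compl_sets by blast
    qed
    have blocks: "P.prob (\<Inter>i\<in>{..<m}. space M - C i) = r ^ m" if "m \<ge> 1" for m
    proof -
      have "P.prob (\<Inter>i\<in>{..<m}. space M - C i) = (\<Prod>i\<in>{..<m}. P.prob (space M - C i))"
        by (rule P.indep_setsD[OF ind2]) (use that Csig lessThan_empty_iff in auto)
      also have "\<dots> = (\<Prod>i\<in>{..<m}. r)"
        using P.prob_compl[OF Cev] probC unfolding r_def by simp
      finally show ?thesis by simp
    qed
    have incl: "noex (m * N) \<subseteq> (\<Inter>i\<in>{..<m}. space M - C i)" if "m \<ge> 1" for m
    proof (safe)
      fix \<omega> i assume w: "\<omega> \<in> noex (m * N)" "i < m" "\<omega> \<in> C i"
      have le: "i * N + N \<le> m * N" using w(2)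
        by (metis Suc_leI add.commute mult_Suc mult_le_mono1)
      have inc: "incr \<xi> j \<omega> = -1" if "j \<in> Ib i" for j
        using w(3) that unfolding C_def incr_def by auto
      have "W (i*N + N) \<omega> = W (i*N) \<omega> + (\<Sum>j\<in>{i*N<..i*N+N}. incr \<xi> j \<omega>)"
        unfolding W_def by (rule walk_split)
      also have "(\<Sum>j\<in>{i*N<..i*N+N}. incr \<xi> j \<omega>) = - real N"
        using inc Ibne(3)[of i] unfolding Ib_def by simp
      finally have eq: "W (i*N + N) \<omega> = W (i*N) \<omega> - real N" by simp
      have le2: "i*N \<le> m*N" using le by linarith
      have "W (i*N) \<omega> < U" using w(1) le2 unfolding noex_def by (auto simp: not_le)
      then have "W (i*N + N) \<omega> \<le> L" using eq NUL by linarith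
      then show False using w(1) le unfolding noex_def by auto
    next
      fix \<omega> assume "\<omega> \<in> noex (m * N)" then show "\<omega> \<in> space M" unfolding noex_def by auto
    qed
    have anti: "noex k \<subseteq> noex k'" if "k' \<le> k" for k k'
      using that unfolding noex_def by auto
    show ?thesis unfolding LIMSEQ_iff
    proof (intro allI impI)
      fix e :: real assume e: "e > 0"
      have "(\<lambda>n. r ^ n) \<longlonglongrightarrow> 0" using r01 by (intro LIMSEQ_power_zero) auto
      then obtain n0 where n0: "\<forall>n\<ge>n0. norm (r ^ n - 0) < e" using e unfolding LIMSEQ_iff by blast
      define m where "m = n0 + 1"
      have m1: "m \<ge> 1" unfolding m_def by simp
      have rm: "r ^ m < e" using n0[rule_format, of m] unfolding m_def by (simp del: power_Suc add: abs_less_iff)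
      show "\<exists>no. \<forall>n\<ge>no. norm (P.prob (noex n) - 0) < e"
      proof (intro exI[of _ "m * N"] allI impI)
        fix n assume n: "n \<ge> m * N"
        have "P.prob (noex n) \<le> P.prob (noex (m * N))"
          by (rule P.finite_measure_mono[OF anti[OF n]]) simp
        also have "\<dots> \<le> P.prob (\<Inter>i\<in>{..<m}. space M - C i)"
          by (rule P.finite_measure_mono[OF incl[OF m1]]) (use Cev m1 lessThan_empty_iff in auto)
        also have "\<dots> < e" using blocks[OF m1] rm by simp
        finally show "norm (P.prob (noex n) - 0) < e" by simp
      qed
    qed
  qed
  have lowinc: "incseq low"
    by (rule incseq_SucI) (auto simp: low_def le_Suc_eq)
  have upinc: "incseq up"
    by (rule incseq_SucI) (auto simp: up_def le_Suc_eq)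
  have la: "(\<lambda>k. alpha_k M L U \<xi> k x) \<longlonglongrightarrow> P.prob (\<Union>k. low k)"
    unfolding alpha by (rule P.finite_Lim_measure_incseq) (use lowinc in auto)
  have lb: "(\<lambda>k. beta_k M L U \<xi> k x) \<longlonglongrightarrow> P.prob (\<Union>k. up k)"
    unfolding beta by (rule P.finite_Lim_measure_incseq) (use upinc in auto)
  have "(\<lambda>k. alpha_k M L U \<xi> k x + beta_k M L U \<xi> k x) \<longlonglongrightarrow> P.prob (\<Union>k. low k) + P.prob (\<Union>k. up k)"
    using la lb by (rule tendsto_add)
  moreover have "(\<lambda>k. alpha_k M L U \<xi> k x + beta_k M L U \<xi> k x) \<longlonglongrightarrow> 1 - 0"
    unfolding sumeq by (intro tendsto_diff tendsto_const noex0)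
  ultimately have "P.prob (\<Union>k. low k) + P.prob (\<Union>k. up k) = 1"
    using LIMSEQ_unique by fastforce
  then show "\<exists>a b. a \<in> {0..1} \<and> b \<in> {0..1}
           \<and> (\<lambda>k. alpha_k M L U \<xi> k x) \<longlonglongrightarrow> a
           \<and> (\<lambda>k. beta_k M L U \<xi> k x) \<longlonglongrightarrow> b
           \<and> a + b = 1"
    using la lb by (intro exI[of _ "P.prob (\<Union>k. low k)"] exI[of _ "P.prob (\<Union>k. up k)"]) auto
qed

end
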